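(* Let $A \in \mathbb{Z}^{(n-2)\times n}$ be an integer matrix of rank $n-2$ with $\ker_{\mathbb{Z}} A \cap \mathbb{N}^n = \{0\}$, and let $B$ be a Gale transform of $A$ whose rows $b_1,\dots,b_n$ are all nonzero. If the toric ideal $I_A$ is strongly robust, then $A$ has at least two mixed bouquets.
   Context: For $A \in \mathbb{Z}^{d\times n}$ of rank $d$, the toric ideal is $I_A = \langle p^u - p^v : u,v\in\mathbb{N}^n,\ Au = Av\rangle \subseteq \mathbb{K}[p_1,\dots,p_n]$. For $u \in \mathbb{N}^n$, $\mathcal{F}(u)=\{v\in\mathbb{N}^n : Av = Au\}$. A binomial $p^u - p^v$ is indispensable if $\mathcal{F}(u)=\{u,v\}$ and $\mathrm{supp}(u)\cap\mathrm{supp}(v)=\emptyset$; the set of these is $\mathcal{S}(A)$. A binomial $p^u-p^v\in I_A$ is primitive if there is no other binomial $p^{u'}-p^{v'}\in I_A$ with $p^{u'}\mid p^u$ and $p^{v'}\mid p^v$; the Graver basis $\mathcal{G}r(A)$ is the set of primitive binomials. $I_A$ is strongly robust if $\mathcal{S}(A)=\mathcal{G}r(A)$. A Gale transform of $A$ is an $n\times (n-d)$ integer matrix $B$ whose columns form a basis of $\ker_{\mathbb{Z}}A$, with rows $b_1,\dots,b_n$. A bouquet is a maximal subset $S\subseteq[n]$ such that $\mathrm{span}(b_s : s\in S)$ is one-dimensional. A bouquet $S$ is mixed if its vectors do not all point in the same direction, i.e. there exist $s,t\in S$ with $b_s = \lambda b_t$ for some $\lambda<0$. *)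

theory Defs
  imports "Jordan_Normal_Form.DL_Rank"
begin

definition natvec :: "nat \<Rightarrow> int vec \<Rightarrow> bool" where
  "natvec n u \<longleftrightarrow> u \<in> carrier_vec n \<and> (\<forall>i<n. u $ i \<ge> 0)"

definition supp :: "int vec \<Rightarrow> nat set" where
  "supp u = {i. i < dim_vec u \<and> u $ i \<noteq> 0}"

definition fiber :: "int mat \<Rightarrow> int vec \<Rightarrow> int vec set" where
  "fiber A u = {v. natvec (dim_col A) v \<and> A *\<^sub>v v = A *\<^sub>v u}"

definition kerZ :: "int mat \<Rightarrow> int vec set" where
  "kerZ A = {x. x \<in> carrier_vec (dim_col A) \<and> A *\<^sub>v x = 0\<^sub>v (dim_row A)}"

text \<open>A nonzero binomial p^u - p^v (encoded as the pair (u,v), u \<noteq> v) lies in I_A.\<close>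
definition in_toric :: "int mat \<Rightarrow> int vec \<Rightarrow> int vec \<Rightarrow> bool" where
  "in_toric A u v \<longleftrightarrow> natvec (dim_col A) u \<and> natvec (dim_col A) v \<and> u \<noteq> v
      \<and> A *\<^sub>v u = A *\<^sub>v v"

definition indispensable :: "int mat \<Rightarrow> int vec \<Rightarrow> int vec \<Rightarrow> bool" where
  "indispensable A u v \<longleftrightarrow> natvec (dim_col A) u \<and> natvec (dim_col A) v \<and> u \<noteq> v
      \<and> fiber A u = {u, v} \<and> supp u \<inter> supp v = {}"

text \<open>p^{u'} divides p^u iff u' \<le> u componentwise.\<close>
definition primitive :: "int mat \<Rightarrow> int vec \<Rightarrow> int vec \<Rightarrow> bool" where
  "primitive A u v \<longleftrightarrow> in_toric A u v \<and>
     \<not> (\<exists>u' v'. in_toric A u' v' \<and> (u', v') \<noteq> (u, v)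
            \<and> (\<forall>i < dim_col A. u' $ i \<le> u $ i) \<and> (\<forall>i < dim_col A. v' $ i \<le> v $ i))"

definition indispensables :: "int mat \<Rightarrow> (int vec \<times> int vec) set" where
  "indispensables A = {(u, v). indispensable A u v}"

definition graver :: "int mat \<Rightarrow> (int vec \<times> int vec) set" where
  "graver A = {(u, v). primitive A u v}"

definition strongly_robust :: "int mat \<Rightarrow> bool" where
  "strongly_robust A \<longleftrightarrow> indispensables A = graver A"

definition rank_int :: "int mat \<Rightarrow> nat" where
  "rank_int A = vec_space.rank (dim_row A) (map_mat rat_of_int A)"

definition gale :: "int mat \<Rightarrow> int mat \<Rightarrow> bool" where
  "gale A B \<longleftrightarrow> dim_row B = dim_col A \<and> dim_col B = dim_col A - rank_int A
     \<and> (\<forall>j < dim_col B. col B j \<in> kerZ A)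
     \<and> (\<forall>x \<in> kerZ A. \<exists>!c. c \<in> carrier_vec (dim_col B) \<and> x = B *\<^sub>v c)"

definition brow :: "int mat \<Rightarrow> nat \<Rightarrow> rat vec" where
  "brow B s = map_vec rat_of_int (row B s)"

definition one_dim_span :: "int mat \<Rightarrow> nat set \<Rightarrow> bool" where
  "one_dim_span B S \<longleftrightarrow>
     (\<exists>w. w \<in> carrier_vec (dim_col B) \<and> w \<noteq> 0\<^sub>v (dim_col B) \<and> (\<forall>s\<in>S. \<exists>c. brow B s = c \<cdot>\<^sub>v w))
     \<and> (\<exists>s\<in>S. brow B s \<noteq> 0\<^sub>v (dim_col B))"

definition bouquet :: "int mat \<Rightarrow> nat set \<Rightarrow> bool" where
  "bouquet B S \<longleftrightarrow> S \<subseteq> {..<dim_row B} \<and> one_dim_span B S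
     \<and> (\<forall>T. S \<subset> T \<and> T \<subseteq> {..<dim_row B} \<longrightarrow> \<not> one_dim_span B T)"

definition mixed_bouquet :: "int mat \<Rightarrow> nat set \<Rightarrow> bool" where
  "mixed_bouquet B S \<longleftrightarrow> bouquet B S \<and>
     (\<exists>s\<in>S. \<exists>t\<in>S. \<exists>l::rat. l < 0 \<and> brow B s = l \<cdot>\<^sub>v brow B t)"

end

theory Submission
  imports Defs
begin


definition det2 :: "int \<times> int \<Rightarrow> int \<times> int \<Rightarrow> int" where
  "det2 x y = fst x * snd y - snd x * fst y"

definition prim :: "int \<times> int \<Rightarrow> int \<times> int" where
  "prim x = (fst x div gcd (fst x) (snd x), snd x div gcd (fst x) (snd x))"

definition negv :: "int \<times> int \<Rightarrow> int \<times> int" where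
  "negv x = (- fst x, - snd x)"

definition gv :: "int \<times> int \<Rightarrow> int \<times> int \<Rightarrow> int \<times> int" where
  "gv e f = (- fst e - fst f, - snd e - snd f)"

lemma prim_props:
  assumes "x \<noteq> (0,0)"
  shows "gcd (fst x) (snd x) > 0" "fst x = gcd (fst x) (snd x) * fst (prim x)"
    "snd x = gcd (fst x) (snd x) * snd (prim x)" "coprime (fst (prim x)) (snd (prim x))"
proof -
  have nz: "fst x \<noteq> 0 \<or> snd x \<noteq> 0" using assms by (cases x) auto
  show "gcd (fst x) (snd x) > 0" using nz by auto
  show "fst x = gcd (fst x) (snd x) * fst (prim x)" by (simp add: prim_def)
  show "snd x = gcd (fst x) (snd x) * snd (prim x)" by (simp add: prim_def)
  show "coprime (fst (prim x)) (snd (prim x))" using div_gcd_coprime[OF nz] by (simp add: prim_def)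
qed

lemma prim_nz: assumes "x \<noteq> (0,0)" shows "prim x \<noteq> (0,0)"
proof
  assume "prim x = (0,0)"
  then have "fst x = 0" "snd x = 0" using prim_props(2,3)[OF assms] by auto
  then show False using assms by (cases x) auto
qed

lemma det2_prim_right:
  assumes "x \<noteq> (0,0)"
  shows "det2 y x = gcd (fst x) (snd x) * det2 y (prim x)"
proof -
  have a: "fst x = gcd (fst x) (snd x) * fst (prim x)" "snd x = gcd (fst x) (snd x) * snd (prim x)"
    using prim_props[OF assms] by auto
  show ?thesis unfolding det2_def by (subst a(1), subst a(2)) (simp add: algebra_simps)
qed

lemma det2_prim_left:
  assumes "x \<noteq> (0,0)"
  shows "det2 x y = gcd (fst x) (snd x) * det2 (prim x) y"
proof -
  have a: "fst x = gcd (fst x) (snd x) * fst (prim x)" "snd x = gcd (fst x) (snd x) * snd (prim x)"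
    using prim_props[OF assms] by auto
  show ?thesis unfolding det2_def by (subst a(1), subst a(2)) (simp add: algebra_simps)
qed

lemma sgn_pos_mult: "(g::int) > 0 \<Longrightarrow> a = g * b \<Longrightarrow> (a > 0 \<longleftrightarrow> b > 0) \<and> (a < 0 \<longleftrightarrow> b < 0) \<and> (a = 0 \<longleftrightarrow> b = 0)"
  by (auto simp: zero_less_mult_iff mult_less_0_iff)

lemma prim_neg_mult:
  assumes "coprime (fst e) (snd e)" "(x::int) < 0"
  shows "prim (x * fst e, x * snd e) = negv e"
proof -
  have "gcd (x * fst e) (x * snd e) = \<bar>x\<bar>"
    using assms(1) by (simp add: gcd_mult_left abs_mult)
  moreover have "x * a div - x = - a" for a
  proof -
    have "x * a = (-x) * (-a)" by simp
    then have "x * a div - x = ((-x) * (-a)) div (-x)" by simp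
    also have "\<dots> = - a" using assms(2) by (subst nonzero_mult_div_cancel_left) auto
    finally show ?thesis .
  qed
  ultimately show ?thesis using assms(2) by (simp add: prim_def negv_def)
qed

lemma decomp:
  assumes "det2 e f = 1"
  shows "fst v = det2 v f * fst e + det2 e v * fst f" "snd v = det2 v f * snd e + det2 e v * snd f"
proof -
  have "fst v = fst v * det2 e f" using assms by simp
  also have "\<dots> = det2 v f * fst e + det2 e v * fst f" by (simp add: det2_def algebra_simps)
  finally show "fst v = det2 v f * fst e + det2 e v * fst f" .
  have "snd v = snd v * det2 e f" using assms by simp
  also have "\<dots> = det2 v f * snd e + det2 e v * snd f" by (simp add: det2_def algebra_simps)
  finally show "snd v = det2 v f * snd e + det2 e v * snd f" .
qed

definition hypR :: "(int \<times> int) set \<Rightarrow> bool" where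
  "hypR R \<longleftrightarrow> (\<forall>e\<in>R. negv e \<in> R \<or> (\<exists>u\<in>R. \<exists>d\<in>R. \<exists>s t N::int. s \<ge> 1 \<and> t \<ge> 1 \<and> N \<ge> s + t
      \<and> N * (- fst e) = s * fst u + t * fst d \<and> N * (- snd e) = s * snd u + t * snd d))"

lemma core:
  fixes R :: "(int \<times> int) set" and c1 c2 :: int
  defines "\<phi> \<equiv> \<lambda>x. c1 * fst x + c2 * snd x"
  assumes m: "m \<in> R" and mx: "\<forall>r\<in>R. \<phi> r \<le> \<phi> m" and pos: "\<phi> m > 0"
    and inj: "inj_on \<phi> (R \<union> negv ` R)" and hyp: "hypR R"
  shows "negv m \<in> R"
proof -
  have phineg: "\<phi> (negv x) = - \<phi> x" for x by (simp add: \<phi>_def negv_def)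
  have comb: "N * \<phi> (negv e) = s * \<phi> u + t * \<phi> d"
    if "N * (- fst e) = s * fst u + t * fst d" "N * (- snd e) = s * snd u + t * snd d" for N s t e u d
  proof -
    have "N * \<phi> (negv e) = c1 * (N * (- fst e)) + c2 * (N * (- snd e))"
      by (simp add: \<phi>_def negv_def algebra_simps)
    also have "\<dots> = s * \<phi> u + t * \<phi> d" using that by (simp add: \<phi>_def algebra_simps)
    finally show ?thesis .
  qed
  have A: "\<phi> (negv r) \<le> \<phi> m" if r: "r \<in> R" for r
  proof (cases "negv r \<in> R")
    case True then show ?thesis using mx by auto
  next
    case False
    then obtain u d s t N where ud: "u \<in> R" "d \<in> R" and st: "s \<ge> 1" "t \<ge> 1" "N \<ge> s + t"
      and eq: "N * (- fst r) = s * fst u + t * fst d" "N * (- snd r) = s * snd u + t * snd d"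
      using hyp r unfolding hypR_def by blast
    have "N * \<phi> (negv r) = s * \<phi> u + t * \<phi> d" using comb[OF eq] .
    also have "\<dots> \<le> s * \<phi> m + t * \<phi> m"
      using mx ud st by (intro add_mono mult_left_mono) auto
    also have "\<dots> = (s + t) * \<phi> m" by (simp add: algebra_simps)
    also have "\<dots> \<le> N * \<phi> m" using st pos by (intro mult_right_mono) auto
    finally have "N * \<phi> (negv r) \<le> N * \<phi> m" .
    then show ?thesis using st by (simp add: mult_le_cancel_left)
  qed
  show ?thesis
  proof (rule ccontr)
    assume nm: "negv m \<notin> R"
    then obtain u d s t N where ud: "u \<in> R" "d \<in> R" and st: "s \<ge> 1" "t \<ge> 1" "N \<ge> s + t"
      and eq: "N * (- fst m) = s * fst u + t * fst d" "N * (- snd m) = s * snd u + t * snd d"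
      using hyp m unfolding hypR_def by blast
    have "N * \<phi> (negv m) = s * \<phi> u + t * \<phi> d" using comb[OF eq] .
    then have e1: "N * \<phi> m = s * \<phi> (negv u) + t * \<phi> (negv d)"
      by (simp add: phineg algebra_simps)
    have au: "\<phi> (negv u) \<le> \<phi> m" and ad: "\<phi> (negv d) \<le> \<phi> m" using A ud by auto
    have "(s + t) * \<phi> m \<le> N * \<phi> m" using st pos by (intro mult_right_mono) auto
    then have "s * (\<phi> m - \<phi> (negv u)) + t * (\<phi> m - \<phi> (negv d)) \<le> 0"
      using e1 by (simp add: algebra_simps)
    moreover have "s * (\<phi> m - \<phi> (negv u)) \<ge> 0" "t * (\<phi> m - \<phi> (negv d)) \<ge> 0"
      using au ad st by auto
    ultimately have "s * (\<phi> m - \<phi> (negv u)) = 0" by linarith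
    then have "\<phi> (negv u) = \<phi> m" using st by auto
    moreover have "negv u \<in> R \<union> negv ` R" "m \<in> R \<union> negv ` R" using ud m by auto
    ultimately have "negv u = m" using inj by (auto dest: inj_onD)
    then have "u = negv m" by (auto simp: negv_def)
    then show False using nm ud by auto
  qed
qed

definition dot2 :: "int \<times> int \<Rightarrow> int \<times> int \<Rightarrow> int" where
  "dot2 x y = fst x * fst y + snd x * snd y"

lemma perp_zero:
  assumes "v \<noteq> (0,0)" "det2 v z = 0" "dot2 v z = 0"
  shows "z = (0,0)"
proof -
  have a: "(fst v * fst v + snd v * snd v) * fst z = 0"
  proof -
    have "(fst v * fst v + snd v * snd v) * fst z = fst v * dot2 v z - snd v * det2 v z"
      by (simp add: det2_def dot2_def algebra_simps)
    then show ?thesis using assms by simp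
  qed
  have b: "(fst v * fst v + snd v * snd v) * snd z = 0"
  proof -
    have "(fst v * fst v + snd v * snd v) * snd z = snd v * dot2 v z + fst v * det2 v z"
      by (simp add: det2_def dot2_def algebra_simps)
    then show ?thesis using assms by simp
  qed
  have "fst v * fst v + snd v * snd v > 0" using assms(1)
    by (cases v) (auto simp: sum_squares_gt_zero_iff)
  then show ?thesis using a b by (cases z) auto
qed

lemma pick:
  assumes fin: "finite R" and hyp: "hypR R" and v: "v \<noteq> (0,0)"
    and ex: "\<exists>r\<in>R. det2 v r > 0"
  shows "\<exists>m\<in>R. negv m \<in> R \<and> det2 v m > 0"
proof -
  obtain r0 where r0: "r0 \<in> R" "det2 v r0 > 0" using ex by blast
  define M where "M = Max ((\<lambda>x. \<bar>dot2 v x\<bar>) ` R)"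
  have Mb: "\<bar>dot2 v x\<bar> \<le> M" if "x \<in> R" for x
    unfolding M_def using fin that by (intro Max_ge) auto
  have Mb': "\<bar>dot2 v x\<bar> \<le> M" if xin: "x \<in> R \<union> negv ` R" for x
  proof -
    have dn: "dot2 v (negv y) = - dot2 v y" for y by (simp add: dot2_def negv_def)
    show ?thesis
    proof (cases "x \<in> R")
      case True then show ?thesis by (rule Mb)
    next
      case False
      then obtain y where "y \<in> R" "x = negv y" using xin by blast
      then show ?thesis using Mb[of y] dn[of y] by simp
    qed
  qed
  define K where "K = 2 * M + 1"
  define c1 where "c1 = fst v - K * snd v"
  define c2 where "c2 = K * fst v + snd v"
  define \<phi> where "\<phi> = (\<lambda>x. c1 * fst x + c2 * snd x)"
  have phi: "\<phi> x = K * det2 v x + dot2 v x" for x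
    by (simp add: \<phi>_def c1_def c2_def det2_def dot2_def algebra_simps)
  have "\<phi> ` R \<noteq> {}" using r0 by auto
  then have "Max (\<phi> ` R) \<in> \<phi> ` R" using fin by (intro Max_in) auto
  then obtain m where m: "m \<in> R" "\<phi> m = Max (\<phi> ` R)" by (metis imageE)
  have mx: "\<forall>r\<in>R. \<phi> r \<le> \<phi> m" using m fin by auto
  have M0: "M \<ge> 0" using Mb[OF r0(1)] by simp
  have "\<phi> r0 \<ge> K - M"
  proof -
    have "K * det2 v r0 \<ge> K * 1" using r0 M0 K_def by (intro mult_left_mono) auto
    then show ?thesis using Mb[OF r0(1)] phi[of r0] by linarith
  qed
  then have pr0: "\<phi> r0 \<ge> M + 1" using K_def by simp
  have pm: "\<phi> m > 0" using mx r0 pr0 M0 by force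
  have dm: "det2 v m > 0"
  proof (rule ccontr)
    assume "\<not> det2 v m > 0"
    then have "K * det2 v m \<le> 0" using K_def M0 by (simp add: mult_nonneg_nonpos)
    then have "\<phi> m \<le> M" using Mb[OF m(1)] phi[of m] by linarith
    then show False using mx r0 pr0 by force
  qed
  have inj: "inj_on \<phi> (R \<union> negv ` R)"
  proof (rule inj_onI)
    fix a b assume ab: "a \<in> R \<union> negv ` R" "b \<in> R \<union> negv ` R" "\<phi> a = \<phi> b"
    have "K * (det2 v a - det2 v b) = dot2 v b - dot2 v a" using ab(3) phi[of a] phi[of b]
      by (simp add: algebra_simps)
    moreover have "\<bar>dot2 v b - dot2 v a\<bar> < K" using Mb'[OF ab(1)] Mb'[OF ab(2)] K_def by linarith
    ultimately have "\<bar>K * (det2 v a - det2 v b)\<bar> < K" by simp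
    moreover have "K > 0" using K_def M0 by simp
    ultimately have "K * \<bar>det2 v a - det2 v b\<bar> < K * 1" by (simp add: abs_mult)
    then have "\<bar>det2 v a - det2 v b\<bar> < 1" using \<open>K > 0\<close> by (simp only: mult_less_cancel_left_pos)
    then have d: "det2 v a = det2 v b" by linarith
    then have "dot2 v a = dot2 v b" using ab(3) phi[of a] phi[of b] by simp
    then have "det2 v (fst a - fst b, snd a - snd b) = 0" "dot2 v (fst a - fst b, snd a - snd b) = 0"
      using d by (simp_all add: det2_def dot2_def algebra_simps)
    then have "(fst a - fst b, snd a - snd b) = (0,0)" using perp_zero[OF v] by blast
    then show "a = b" by (simp add: prod_eq_iff)
  qed
  have "negv m \<in> R"
    using core[of m R c1 c2] m(1) mx pm inj hyp unfolding \<phi>_def by blast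
  then show ?thesis using m(1) dm by blast
qed

lemma int_step:
  fixes P :: "int \<Rightarrow> bool"
  assumes "\<not> P lo" "P hi" "lo \<le> hi"
  shows "\<exists>m. P m \<and> \<not> P (m - 1)"
proof -
  have "\<forall>h. nat (h - lo) = k \<longrightarrow> P h \<longrightarrow> lo \<le> h \<longrightarrow> (\<exists>m. P m \<and> \<not> P (m - 1))" for k
  proof (induction k)
    case 0
    show ?case
    proof (intro allI impI)
      fix h assume "nat (h - lo) = 0" "P h" "lo \<le> h"
      then have "h = lo" by simp
      then show "\<exists>m. P m \<and> \<not> P (m - 1)" using assms(1) \<open>P h\<close> by simp
    qed
  next
    case (Suc k)
    show ?case
    proof (intro allI impI)
      fix h assume h: "nat (h - lo) = Suc k" "P h" "lo \<le> h"
      show "\<exists>m. P m \<and> \<not> P (m - 1)"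
      proof (cases "P (h - 1)")
        case True
        have "nat (h - 1 - lo) = k" "lo \<le> h - 1" using h by auto
        then show ?thesis using Suc.IH True by blast
      next
        case False
        then show ?thesis using h by blast
      qed
    qed
  qed
  then show ?thesis using assms by blast
qed

lemma bad_hyp:
  fixes bs :: "nat \<Rightarrow> int \<times> int" and n :: nat
  assumes nz: "\<forall>j<n. bs j \<noteq> (0,0)"
    and ex: "\<forall>v. v \<noteq> (0,0) \<longrightarrow> (\<exists>j<n. det2 v (bs j) > 0)"
    and bad: "\<forall>i<n. \<forall>f. det2 (prim (bs i)) f = 1 \<longrightarrow>
        (\<exists>j<n. det2 f (bs j) > 0 \<and> det2 (bs j) (gv (prim (bs i)) f) > 0)"
  shows "hypR (prim ` bs ` {..<n})"
  unfolding hypR_def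
proof
  let ?R = "prim ` bs ` {..<n}"
  fix e assume "e \<in> ?R"
  then obtain i where i: "i < n" "e = prim (bs i)" by auto
  have enz: "e \<noteq> (0,0)" using prim_nz nz i by auto
  have cop: "coprime (fst e) (snd e)" using prim_props(4) nz i by auto
  then have "gcd (fst e) (snd e) = 1" by (simp add: coprime_iff_gcd_eq_1)
  then obtain p q where pq: "p * fst e + q * snd e = 1" using bezout_int[of "fst e" "snd e"] by auto
  define f0 where "f0 = (- q, p)"
  have ef0: "det2 e f0 = 1" using pq by (simp add: f0_def det2_def algebra_simps)
  define x where "x = (\<lambda>j. det2 (bs j) f0)"
  define y where "y = (\<lambda>j. det2 e (bs j))"
  define fn where "fn = (\<lambda>k::int. (fst f0 + k * fst e, snd f0 + k * snd e))"
  have efn: "det2 e (fn k) = 1" for k using ef0 by (simp add: fn_def det2_def algebra_simps)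
  have d1: "det2 (fn k) (bs j) = k * y j - x j" for k j
    by (simp add: fn_def x_def y_def det2_def algebra_simps)
  have d2: "det2 (bs j) (gv e (fn k)) = (k + 1) * y j - x j" for k j
    by (simp add: fn_def x_def y_def gv_def det2_def algebra_simps)
  show "negv e \<in> ?R \<or> (\<exists>u\<in>?R. \<exists>d\<in>?R. \<exists>s t N::int. s \<ge> 1 \<and> t \<ge> 1 \<and> N \<ge> s + t
      \<and> N * (- fst e) = s * fst u + t * fst d \<and> N * (- snd e) = s * snd u + t * snd d)"
  proof (cases "negv e \<in> ?R")
    case True then show ?thesis by blast
  next
    case notmixed: False
    define P where "P = (\<lambda>k::int. \<exists>j<n. y j > 0 \<and> k * y j > x j)"
    obtain j0 where j0: "j0 < n" "y j0 > 0" using ex enz unfolding y_def by blast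
    define hi where "hi = \<bar>x j0\<bar> + 1"
    have "hi * y j0 \<ge> hi * 1" using j0 hi_def by (intro mult_left_mono) auto
    then have "hi * y j0 > x j0" using hi_def by linarith
    then have Phi: "P hi" unfolding P_def using j0 by blast
    define L where "L = (\<Sum>j<n. \<bar>x j\<bar>)"
    define lo where "lo = - L - 1"
    have L0: "L \<ge> 0" unfolding L_def by (simp add: sum_nonneg)
    have Lx: "\<bar>x j\<bar> \<le> L" if "j < n" for j
      unfolding L_def using that by (intro member_le_sum) auto
    have nPlo: "\<not> P lo"
    proof
      assume "P lo"
      then obtain j where j: "j < n" "y j > 0" "lo * y j > x j" unfolding P_def by blast
      have "lo * y j \<le> lo * 1" using j L0 lo_def by (intro mult_left_mono_neg) auto
      then show False using j Lx[OF j(1)] lo_def by linarith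
    qed
    have "lo \<le> hi" using L0 lo_def hi_def by simp
    then obtain m where m: "P m" "\<not> P (m - 1)" using int_step[of P lo hi] nPlo Phi by blast
    obtain j where j: "j < n" "det2 (fn (m - 1)) (bs j) > 0" "det2 (bs j) (gv e (fn (m - 1))) > 0"
      using bad i efn by blast
    have jx: "(m - 1) * y j - x j > 0" "m * y j - x j > 0" using j(2,3) d1 d2 by auto
    consider "y j > 0" | "y j = 0" | "y j < 0" by linarith
    then show ?thesis
    proof cases
      case 1
      then have "P (m - 1)" unfolding P_def using j(1) jx by auto
      then show ?thesis using m by blast
    next
      case 2
      then have xneg: "x j < 0" using jx by simp
      have "fst (bs j) = x j * fst e" "snd (bs j) = x j * snd e"
        using decomp(1)[OF ef0, of "bs j"] decomp(2)[OF ef0, of "bs j"] 2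
        unfolding x_def y_def by (simp_all only: mult_zero_left add_0_right)
      then have "bs j = (x j * fst e, x j * snd e)" by (simp add: prod_eq_iff)
      then have "prim (bs j) = negv e" using prim_neg_mult[OF cop xneg] by simp
      then have "negv e \<in> ?R" using j(1) by (metis image_eqI lessThan_iff)
      then show ?thesis using notmixed by blast
    next
      case 3
      obtain j' where j': "j' < n" "y j' > 0" "m * y j' > x j'" using m(1) unfolding P_def by blast
      define f where "f = fn m"
      have ef: "det2 e f = 1" using efn f_def by simp
      define u where "u = prim (bs j')"
      define d where "d = prim (bs j)"
      have uR: "u \<in> ?R" "d \<in> ?R" using j(1) j'(1) u_def d_def by auto
      have nzj: "bs j \<noteq> (0,0)" "bs j' \<noteq> (0,0)" using nz j(1) j'(1) by auto
      have fu0: "det2 f (bs j') > 0" using d1[of m j'] j' f_def by simp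
      have fd0: "det2 f (bs j) > 0" using d1[of m j] jx f_def by simp
      have fu: "det2 f u > 0" using sgn_pos_mult[OF prim_props(1)[OF nzj(2)] det2_prim_right[OF nzj(2), of f]] fu0 u_def by simp
      have fd: "det2 f d > 0" using sgn_pos_mult[OF prim_props(1)[OF nzj(1)] det2_prim_right[OF nzj(1), of f]] fd0 d_def by simp
      have eu: "det2 e u > 0" using sgn_pos_mult[OF prim_props(1)[OF nzj(2)] det2_prim_right[OF nzj(2), of e]] j'(2) u_def y_def by simp
      have ed: "det2 e d < 0" using sgn_pos_mult[OF prim_props(1)[OF nzj(1)] det2_prim_right[OF nzj(1), of e]] 3 d_def y_def by simp
      define s where "s = - det2 e d"
      define t where "t = det2 e u"
      define N where "N = s * det2 f u + t * det2 f d"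
      have s1: "s \<ge> 1" "t \<ge> 1" using ed eu s_def t_def by auto
      have "s * det2 f u \<ge> s * 1" "t * det2 f d \<ge> t * 1" using s1 fu fd by (intro mult_left_mono; simp)+
      then have N1: "N \<ge> s + t" unfolding N_def by simp
      have uf: "det2 u f = - det2 f u" "det2 d f = - det2 f d" by (simp_all add: det2_def)
      have du: "fst u = det2 u f * fst e + det2 e u * fst f" "snd u = det2 u f * snd e + det2 e u * snd f"
        by (rule decomp[OF ef])+
      have dd: "fst d = det2 d f * fst e + det2 e d * fst f" "snd d = det2 d f * snd e + det2 e d * snd f"
        by (rule decomp[OF ef])+
      have eq1: "N * (- fst e) = s * fst u + t * fst d"
        apply (subst du(1), subst dd(1))
        unfolding uf N_def s_def t_def by (simp add: algebra_simps)
      have eq2: "N * (- snd e) = s * snd u + t * snd d"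
        apply (subst du(2), subst dd(2))
        unfolding uf N_def s_def t_def by (simp add: algebra_simps)
      show ?thesis using uR s1 N1 eq1 eq2 by blast
    qed
  qed
qed

lemma two_mixed:
  fixes bs :: "nat \<Rightarrow> int \<times> int" and n :: nat
  assumes nz: "\<forall>j<n. bs j \<noteq> (0,0)"
    and ex: "\<forall>v. v \<noteq> (0,0) \<longrightarrow> (\<exists>j<n. det2 v (bs j) > 0)"
    and bad: "\<forall>i<n. \<forall>f. det2 (prim (bs i)) f = 1 \<longrightarrow>
        (\<exists>j<n. det2 f (bs j) > 0 \<and> det2 (bs j) (gv (prim (bs i)) f) > 0)"
  shows "\<exists>i1<n. \<exists>j1<n. \<exists>i2<n. \<exists>j2<n. prim (bs j1) = negv (prim (bs i1))
      \<and> prim (bs j2) = negv (prim (bs i2)) \<and> det2 (bs i1) (bs i2) \<noteq> 0"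
proof -
  define R where "R = prim ` bs ` {..<n}"
  have fin: "finite R" unfolding R_def by simp
  have hyp: "hypR R" unfolding R_def by (rule bad_hyp[OF nz ex bad])
  have exR: "\<exists>r\<in>R. det2 v r > 0" if v: "v \<noteq> (0,0)" for v
  proof -
    obtain j where j: "j < n" "det2 v (bs j) > 0" using ex v by blast
    have "bs j \<noteq> (0,0)" using nz j by auto
    then have "det2 v (prim (bs j)) > 0"
      using sgn_pos_mult[OF prim_props(1) det2_prim_right] j(2) by blast
    then show ?thesis using j(1) unfolding R_def by auto
  qed
  obtain m1 where m1: "m1 \<in> R" "negv m1 \<in> R"
    using pick[OF fin hyp, of "(1,0)"] exR[of "(1,0)"] by auto
  obtain i1 where i1: "i1 < n" "m1 = prim (bs i1)" using m1(1) unfolding R_def by auto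
  have nzi1: "bs i1 \<noteq> (0,0)" using nz i1 by auto
  have "m1 \<noteq> (0,0)" using prim_nz[OF nzi1] i1 by simp
  then obtain m2 where m2: "m2 \<in> R" "negv m2 \<in> R" "det2 m1 m2 > 0"
    using pick[OF fin hyp, of m1] exR[of m1] by auto
  obtain i2 where i2: "i2 < n" "m2 = prim (bs i2)" using m2(1) unfolding R_def by auto
  obtain j1 where j1: "j1 < n" "negv m1 = prim (bs j1)" using m1(2) unfolding R_def by auto
  obtain j2 where j2: "j2 < n" "negv m2 = prim (bs j2)" using m2(2) unfolding R_def by auto
  have nzi2: "bs i2 \<noteq> (0,0)" using nz i2 by auto
  have "det2 (bs i1) (bs i2) = gcd (fst (bs i1)) (snd (bs i1)) * (gcd (fst (bs i2)) (snd (bs i2)) * det2 m1 m2)"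
    using det2_prim_left[OF nzi1] det2_prim_right[OF nzi2] i1 i2 by simp
  moreover have "gcd (fst (bs i1)) (snd (bs i1)) > 0" "gcd (fst (bs i2)) (snd (bs i2)) > 0"
    using prim_props(1) nzi1 nzi2 by auto
  ultimately have "det2 (bs i1) (bs i2) \<noteq> 0" using m2(3) by simp
  then show ?thesis using i1 i2 j1 j2 by metis
qed


definition vec2 :: "'a \<Rightarrow> 'a \<Rightarrow> 'a vec" where
  "vec2 a b = vec 2 (\<lambda>k. if k = 0 then a else b)"

definition bsB :: "int mat \<Rightarrow> nat \<Rightarrow> int \<times> int" where
  "bsB B j = (B $$ (j,0), B $$ (j,1))"

lemma vec2_carrier[simp]: "vec2 a b \<in> carrier_vec 2"
  by (simp add: vec2_def)

lemma vec2_idx[simp]: "vec2 a b $ 0 = a" "vec2 a b $ 1 = b" "dim_vec (vec2 a b) = 2"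
  by (simp_all add: vec2_def)

lemma vec2_eta: "c \<in> carrier_vec 2 \<Longrightarrow> c = vec2 (c $ 0) (c $ 1)"
  by (intro eq_vecI) (auto simp: vec2_def less_2_cases_iff)

lemma vec2_inj: "vec2 a b = vec2 a' b' \<Longrightarrow> a = a' \<and> b = b'"
  by (metis vec2_idx(1,2))

lemma mv2:
  assumes "dim_col B = 2" "j < dim_row B"
  shows "(B *\<^sub>v vec2 a b) $ j = B $$ (j,0) * a + B $$ (j,1) * b"
  using assms by (simp add: vec2_def scalar_prod_def numeral_2_eq_2)


lemma gale_setup:
  fixes A B :: "int mat" and n :: nat
  assumes a1: "dim_col A = n" and a2: "dim_row A + 2 = n" and a3: "rank_int A = n - 2"
    and g: "gale A B"
  shows "dim_row B = n" "dim_col B = 2"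
    "\<And>c. c \<in> carrier_vec 2 \<Longrightarrow> B *\<^sub>v c \<in> kerZ A"
    "\<And>c c'. c \<in> carrier_vec 2 \<Longrightarrow> c' \<in> carrier_vec 2 \<Longrightarrow> B *\<^sub>v c = B *\<^sub>v c' \<Longrightarrow> c = c'"
    "\<And>x. x \<in> kerZ A \<Longrightarrow> \<exists>c \<in> carrier_vec 2. x = B *\<^sub>v c"
proof -
  show rB: "dim_row B = n" using g a1 unfolding gale_def by simp
  show cB: "dim_col B = 2" using g a1 a2 a3 unfolding gale_def by simp
  have cols: "\<And>j. j < 2 \<Longrightarrow> col B j \<in> kerZ A" using g cB unfolding gale_def by simp
  have uniq: "\<And>x. x \<in> kerZ A \<Longrightarrow> \<exists>!c. c \<in> carrier_vec 2 \<and> x = B *\<^sub>v c"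
    using g cB unfolding gale_def by simp
  have AB: "A * B = 0\<^sub>m (dim_row A) 2"
  proof (rule eq_matI)
    fix i j assume ij: "i < dim_row (0\<^sub>m (dim_row A) 2 :: int mat)" "j < dim_col (0\<^sub>m (dim_row A) 2 :: int mat)"
    then have i: "i < dim_row A" and j: "j < 2" by auto
    have "A *\<^sub>v col B j = 0\<^sub>v (dim_row A)" using cols[OF j] unfolding kerZ_def by simp
    then have "(A *\<^sub>v col B j) $ i = 0" using i by simp
    then have "row A i \<bullet> col B j = 0" using i by simp
    then show "(A * B) $$ (i, j) = 0\<^sub>m (dim_row A) 2 $$ (i, j)" using i j cB by simp
  qed (auto simp: cB)
  show ker: "B *\<^sub>v c \<in> kerZ A" if c: "c \<in> carrier_vec 2" for c
  proof -
    have A: "A \<in> carrier_mat (dim_row A) n" using a1 by auto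
    have B: "B \<in> carrier_mat n 2" using rB cB by auto
    have "A *\<^sub>v (B *\<^sub>v c) = (A * B) *\<^sub>v c" using assoc_mult_mat_vec[OF A B c] by simp
    also have "\<dots> = 0\<^sub>v (dim_row A)" unfolding AB using c by (intro eq_vecI) (auto simp: scalar_prod_def)
    finally have z: "A *\<^sub>v (B *\<^sub>v c) = 0\<^sub>v (dim_row A)" .
    have "B *\<^sub>v c \<in> carrier_vec n" using B c by simp
    then show ?thesis unfolding kerZ_def using a1 z by simp
  qed
  show "c = c'" if "c \<in> carrier_vec 2" "c' \<in> carrier_vec 2" "B *\<^sub>v c = B *\<^sub>v c'" for c c'
    using uniq[OF ker[OF that(1)]] that by blast
  show "\<exists>c \<in> carrier_vec 2. x = B *\<^sub>v c" if "x \<in> kerZ A" for x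
    using uniq[OF that] by blast
qed

lemma pos2:
  fixes A B :: "int mat" and n :: nat
  assumes rB: "dim_row B = n" and cB: "dim_col B = 2"
    and ker: "\<And>c. c \<in> carrier_vec 2 \<Longrightarrow> B *\<^sub>v c \<in> kerZ A"
    and inj: "\<And>c c'. c \<in> carrier_vec 2 \<Longrightarrow> c' \<in> carrier_vec 2 \<Longrightarrow> B *\<^sub>v c = B *\<^sub>v c' \<Longrightarrow> c = c'"
    and pos: "\<forall>x \<in> kerZ A. natvec n x \<longrightarrow> x = 0\<^sub>v n"
    and h: "\<forall>j<n. B $$ (j,0) * a + B $$ (j,1) * b \<ge> 0"
  shows "a = 0 \<and> b = 0"
proof -
  have k: "B *\<^sub>v vec2 a b \<in> kerZ A" by (rule ker) simp
  have "natvec n (B *\<^sub>v vec2 a b)" unfolding natvec_def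
  proof (intro conjI allI impI)
    have "B \<in> carrier_mat n 2" using rB cB by auto
    then show "B *\<^sub>v vec2 a b \<in> carrier_vec n" by simp
    fix j assume j: "j < n"
    have "(B *\<^sub>v vec2 a b) $ j = B $$ (j,0) * a + B $$ (j,1) * b" using mv2[OF cB] j rB by simp
    then show "(B *\<^sub>v vec2 a b) $ j \<ge> 0" using h j by simp
  qed
  moreover have "natvec n (B *\<^sub>v vec2 a b) \<longrightarrow> B *\<^sub>v vec2 a b = 0\<^sub>v n"
    using pos k by (rule bspec)
  ultimately have z: "B *\<^sub>v vec2 a b = 0\<^sub>v n" by (rule rev_mp)
  have "B *\<^sub>v vec2 0 0 = 0\<^sub>v n"
  proof (rule eq_vecI)
    fix j assume "j < dim_vec (0\<^sub>v n :: int vec)"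
    then have j: "j < dim_row B" using rB by simp
    show "(B *\<^sub>v vec2 0 0) $ j = 0\<^sub>v n $ j" using mv2[OF cB j, of 0 0] j rB by simp
  qed (simp add: rB)
  then have "B *\<^sub>v vec2 a b = B *\<^sub>v vec2 0 0" using z by simp
  then have "vec2 a b = vec2 0 0" by (rule inj[OF vec2_carrier vec2_carrier])
  then show ?thesis by (rule vec2_inj)
qed


lemma vec_eqI_n: "u \<in> carrier_vec n \<Longrightarrow> v \<in> carrier_vec n \<Longrightarrow> (\<And>j. j < n \<Longrightarrow> u $ j = v $ j) \<Longrightarrow> u = v"
  by (intro eq_vecI) auto

lemma good_contra:
  fixes A B :: "int mat" and n :: nat
  assumes cA: "dim_col A = n" and rB: "dim_row B = n" and cB: "dim_col B = 2"
    and ker: "\<And>c. c \<in> carrier_vec 2 \<Longrightarrow> B *\<^sub>v c \<in> kerZ A"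
    and inj: "\<And>c c'. c \<in> carrier_vec 2 \<Longrightarrow> c' \<in> carrier_vec 2 \<Longrightarrow> B *\<^sub>v c = B *\<^sub>v c' \<Longrightarrow> c = c'"
    and surj: "\<And>x. x \<in> kerZ A \<Longrightarrow> \<exists>c \<in> carrier_vec 2. x = B *\<^sub>v c"
    and pos: "\<And>a b. \<forall>j<n. B $$ (j,0) * a + B $$ (j,1) * b \<ge> 0 \<Longrightarrow> a = 0 \<and> b = 0"
    and sr: "strongly_robust A"
    and i: "i < n" and nzi: "bsB B i \<noteq> (0,0)"
    and ef: "det2 (prim (bsB B i)) f = 1"
    and good: "\<forall>j<n. \<not> (det2 f (bsB B j) > 0 \<and> det2 (bsB B j) (gv (prim (bsB B i)) f) > 0)"
  shows False
proof -
  define e where "e = prim (bsB B i)"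
  have ef': "det2 e f = 1" using ef e_def by simp
  have enz: "e \<noteq> (0,0)" using prim_nz[OF nzi] e_def by simp
  have Acar: "A \<in> carrier_mat (dim_row A) n" using cA by auto
  have Bcar: "B \<in> carrier_mat n 2" using rB cB by auto
  have mvB: "(B *\<^sub>v vec2 a b) $ j = B $$ (j,0) * a + B $$ (j,1) * b" if "j < n" for a b j
    using mv2[OF cB, of j a b] that rB by simp
  have kerA: "A *\<^sub>v x = 0\<^sub>v (dim_row A)" "x \<in> carrier_vec n" if "x \<in> kerZ A" for x
    using that cA unfolding kerZ_def by auto
  define c0 where "c0 = vec2 (- snd e) (fst e)"
  define w where "w = B *\<^sub>v c0"
  have wj: "w $ j = det2 e (bsB B j)" if "j < n" for j
    unfolding w_def c0_def using mvB[OF that] by (simp add: det2_def bsB_def algebra_simps)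
  have wker: "w \<in> kerZ A" unfolding w_def c0_def by (rule ker) simp
  have wcar: "w \<in> carrier_vec n" using kerA(2)[OF wker] .
  have Aw: "A *\<^sub>v w = 0\<^sub>v (dim_row A)" using kerA(1)[OF wker] .
  obtain jp where jp: "jp < n" "w $ jp > 0"
  proof -
    have "\<not> (\<forall>j<n. B $$ (j,0) * snd e + B $$ (j,1) * (- fst e) \<ge> 0)"
    proof
      assume "\<forall>j<n. B $$ (j,0) * snd e + B $$ (j,1) * (- fst e) \<ge> 0"
      then have "snd e = 0 \<and> - fst e = 0" by (rule pos)
      then show False using enz by (cases e) auto
    qed
    then obtain j where "j < n" "B $$ (j,0) * snd e + B $$ (j,1) * (- fst e) < 0" by force
    moreover have "w $ j = - (B $$ (j,0) * snd e + B $$ (j,1) * (- fst e))"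
      using wj[OF \<open>j < n\<close>] by (simp add: det2_def bsB_def algebra_simps)
    ultimately show ?thesis using that by force
  qed
  define u where "u = vec n (\<lambda>j. max (w $ j) 0)"
  define v where "v = vec n (\<lambda>j. max (- (w $ j)) 0)"
  have ucar: "u \<in> carrier_vec n" and vcar: "v \<in> carrier_vec n" unfolding u_def v_def by auto
  have uj: "u $ j = max (w $ j) 0" and vj: "v $ j = max (- (w $ j)) 0" if "j < n" for j
    unfolding u_def v_def using that by auto
  have nu: "natvec n u" and nv: "natvec n v" unfolding natvec_def using ucar vcar uj vj by auto
  have uvw: "u - v = w"
    by (rule vec_eqI_n[of _ n]) (use ucar vcar wcar uj vj in auto)
  have Auv: "A *\<^sub>v u = A *\<^sub>v v"
  proof -
    have "A *\<^sub>v u - A *\<^sub>v v = A *\<^sub>v (u - v)" using mult_minus_distrib_mat_vec[OF Acar ucar vcar] by simp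
    also have "\<dots> = 0\<^sub>v (dim_row A)" using uvw Aw by simp
    finally have h: "A *\<^sub>v u - A *\<^sub>v v = 0\<^sub>v (dim_row A)" .
    show ?thesis
    proof (rule eq_vecI)
      fix k assume "k < dim_vec (A *\<^sub>v v)"
      then have k: "k < dim_row A" by simp
      have "(A *\<^sub>v u - A *\<^sub>v v) $ k = 0" using h k by simp
      then show "(A *\<^sub>v u) $ k = (A *\<^sub>v v) $ k" using k by simp
    qed simp
  qed
  have uneqv: "u \<noteq> v"
  proof
    assume "u = v" then have "u $ jp = v $ jp" by simp
    then show False using uj[OF jp(1)] vj[OF jp(1)] jp(2) by simp
  qed
  have tor: "in_toric A u v" unfolding in_toric_def using nu nv uneqv Auv cA by simp
  have wi: "w $ i = 0"
  proof -
    have "w $ i = det2 e (bsB B i)" using wj[OF i] .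
    also have "\<dots> = gcd (fst (bsB B i)) (snd (bsB B i)) * det2 e e"
      using det2_prim_right[OF nzi, of e] e_def by simp
    finally show ?thesis by (simp add: det2_def)
  qed
  have prim_uv: "primitive A u v"
    unfolding primitive_def
  proof (intro conjI tor notI)
    assume "\<exists>u' v'. in_toric A u' v' \<and> (u', v') \<noteq> (u, v) \<and> (\<forall>i<dim_col A. u' $ i \<le> u $ i) \<and> (\<forall>i<dim_col A. v' $ i \<le> v $ i)"
    then obtain u' v' where t': "in_toric A u' v'" and ne: "(u', v') \<noteq> (u, v)"
      and le1: "\<forall>j<n. u' $ j \<le> u $ j" and le2: "\<forall>j<n. v' $ j \<le> v $ j" using cA by auto
    have nu': "natvec n u'" and nv': "natvec n v'" and uv': "u' \<noteq> v'" and Auv': "A *\<^sub>v u' = A *\<^sub>v v'"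
      using t' cA unfolding in_toric_def by auto
    have u'car: "u' \<in> carrier_vec n" and v'car: "v' \<in> carrier_vec n"
      and u'0: "\<forall>j<n. u' $ j \<ge> 0" and v'0: "\<forall>j<n. v' $ j \<ge> 0"
      using nu' nv' unfolding natvec_def by auto
    define l where "l = u' - v'"
    have lcar: "l \<in> carrier_vec n" unfolding l_def using u'car v'car by simp
    have lj: "l $ j = u' $ j - v' $ j" if "j < n" for j using that u'car v'car unfolding l_def by simp
    have "A *\<^sub>v l = A *\<^sub>v u' - A *\<^sub>v v'" unfolding l_def by (rule mult_minus_distrib_mat_vec[OF Acar u'car v'car])
    also have "\<dots> = 0\<^sub>v (dim_row A)"
      by (rule eq_vecI) (auto simp: Auv')
    finally have "l \<in> kerZ A" unfolding kerZ_def using lcar cA by simp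
    then obtain c' where c': "c' \<in> carrier_vec 2" "l = B *\<^sub>v c'" using surj by blast
    define a where "a = c' $ 0"
    define b where "b = c' $ 1"
    have c'eq: "c' = vec2 a b" unfolding a_def b_def by (rule vec2_eta[OF c'(1)])
    have lB: "l $ j = B $$ (j,0) * a + B $$ (j,1) * b" if "j < n" for j
      using mvB[OF that, of a b] c' c'eq by simp
    have li: "l $ i = 0" using lj[OF i] le1 le2 u'0 v'0 uj[OF i] vj[OF i] wi i by force
    define g where "g = gcd (fst (bsB B i)) (snd (bsB B i))"
    have gpos: "g > 0" using prim_props(1)[OF nzi] g_def by simp
    have bi: "B $$ (i,0) = g * fst e" "B $$ (i,1) = g * snd e"
      using prim_props(2,3)[OF nzi] g_def e_def by (simp_all add: bsB_def)
    have "g * (fst e * a + snd e * b) = 0" using lB[OF i] li bi by (simp add: algebra_simps)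
    then have h0: "fst e * a + snd e * b = 0" using gpos by simp
    define t where "t = a * fst f + b * snd f"
    have "a * det2 e f = snd f * (fst e * a + snd e * b) - snd e * t"
      by (simp add: t_def det2_def algebra_simps)
    then have ta: "a = - snd e * t" using ef' h0 by simp
    have "b * det2 e f = - fst f * (fst e * a + snd e * b) + fst e * t"
      by (simp add: t_def det2_def algebra_simps)
    then have tb: "b = fst e * t" using ef' h0 by simp
    have ltw: "l $ j = t * w $ j" if "j < n" for j
    proof -
      have "l $ j = t * (fst e * B $$ (j,1) - snd e * B $$ (j,0))"
        using lB[OF that] ta tb by (simp add: algebra_simps)
      moreover have "w $ j = fst e * B $$ (j,1) - snd e * B $$ (j,0)"
        using wj[OF that] by (simp add: det2_def bsB_def)
      ultimately show ?thesis by simp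
    qed
    have a1: "u' $ jp \<le> u $ jp" "v' $ jp \<ge> 0" "v' $ jp \<le> v $ jp" "u' $ jp \<ge> 0"
      using le1 v'0 le2 u'0 jp(1) by blast+
    have a2: "u $ jp = w $ jp" "v $ jp = 0" using uj[OF jp(1)] vj[OF jp(1)] jp(2) by simp_all
    have "t * w $ jp \<le> 1 * w $ jp" using ltw[OF jp(1)] lj[OF jp(1)] a1 a2 by linarith
    then have t1: "t \<le> 1" using jp(2) by (simp add: mult_le_cancel_right)
    have "t * w $ jp \<ge> 0" using ltw[OF jp(1)] lj[OF jp(1)] a1 a2 by linarith
    then have t0: "t \<ge> 0" using jp(2) by (simp add: zero_le_mult_iff)
    show False
    proof (cases "t = 0")
      case True
      have "u' = v'" by (rule vec_eqI_n[OF u'car v'car]) (use ltw lj True in force)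
      then show False using uv' by simp
    next
      case False
      then have t: "t = 1" using t0 t1 by simp
      have e1: "u' $ j = u $ j \<and> v' $ j = v $ j" if j: "j < n" for j
      proof -
        have "u' $ j - v' $ j = w $ j" using ltw[OF j] lj[OF j] t by simp
        then show ?thesis using le1 le2 u'0 v'0 uj[OF j] vj[OF j] j by force
      qed
      have "u' = u" by (rule vec_eqI_n[OF u'car ucar]) (use e1 in blast)
      moreover have "v' = v" by (rule vec_eqI_n[OF v'car vcar]) (use e1 in blast)
      ultimately show False using ne by simp
    qed
  qed
  have "(u, v) \<in> indispensables A" using sr prim_uv unfolding strongly_robust_def graver_def by simp
  then have fib: "fiber A u = {u, v}" unfolding indispensables_def indispensable_def by simp
  define gg where "gg = gv e f"
  define c2 where "c2 = vec2 (snd gg) (- fst gg)"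
  define z where "z = u - B *\<^sub>v c2"
  have Bc2: "(B *\<^sub>v c2) $ j = det2 (bsB B j) gg" if "j < n" for j
    unfolding c2_def using mvB[OF that] by (simp add: det2_def bsB_def algebra_simps)
  have c2ker: "B *\<^sub>v c2 \<in> kerZ A" unfolding c2_def by (rule ker) simp
  have Bc2car: "B *\<^sub>v c2 \<in> carrier_vec n" using kerA(2)[OF c2ker] .
  have zcar: "z \<in> carrier_vec n" unfolding z_def using ucar Bc2car by simp
  have zj: "z $ j = u $ j - det2 (bsB B j) gg" if "j < n" for j
  proof -
    have "(u - B *\<^sub>v c2) $ j = u $ j - (B *\<^sub>v c2) $ j" by (rule index_minus_vec(1)) (simp add: that rB)
    then show ?thesis unfolding z_def using Bc2[OF that] by linarith
  qed
  have znat: "natvec n z" unfolding natvec_def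
  proof (intro conjI allI impI zcar)
    fix j assume j: "j < n"
    have g1: "det2 f (bsB B j) = - det2 (bsB B j) f" by (simp add: det2_def)
    have g2: "det2 (bsB B j) gg = det2 e (bsB B j) - det2 (bsB B j) f"
      by (simp add: gg_def gv_def det2_def algebra_simps)
    have "\<not> (det2 f (bsB B j) > 0 \<and> det2 (bsB B j) gg > 0)" using good j e_def gg_def by simp
    then show "z $ j \<ge> 0" using zj[OF j] uj[OF j] wj[OF j] g1 g2 by auto
  qed
  have Az: "A *\<^sub>v z = A *\<^sub>v u"
  proof -
    have "A *\<^sub>v z = A *\<^sub>v u - A *\<^sub>v (B *\<^sub>v c2)" unfolding z_def by (rule mult_minus_distrib_mat_vec[OF Acar ucar Bc2car])
    also have "A *\<^sub>v (B *\<^sub>v c2) = 0\<^sub>v (dim_row A)" using kerA(1)[OF c2ker] .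
    finally show ?thesis by (intro eq_vecI) auto
  qed
  have "z \<in> fiber A u" unfolding fiber_def using znat Az cA by simp
  then have zuv: "z = u \<or> z = v" using fib by simp
  have c2car: "c2 \<in> carrier_vec 2" unfolding c2_def by simp
  have c0car: "c0 \<in> carrier_vec 2" unfolding c0_def by simp
  have fnz: "f \<noteq> (0,0)" using ef' by (auto simp: det2_def)
  have fne: "f \<noteq> negv e" using ef' by (auto simp: det2_def negv_def)
  show False
  proof (cases "z = u")
    case True
    have "B *\<^sub>v c2 = B *\<^sub>v vec2 0 0"
    proof (rule vec_eqI_n[OF Bc2car])
      show "B *\<^sub>v vec2 0 0 \<in> carrier_vec n" using Bcar by simp
      fix j assume j: "j < n"
      have "z $ j = u $ j" using True by simp
      moreover have "(B *\<^sub>v vec2 0 0) $ j = 0" using mvB[OF j, of 0 0] by (simp only: mult_zero_right add_0_right)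
      ultimately show "(B *\<^sub>v c2) $ j = (B *\<^sub>v vec2 0 0) $ j" using zj[OF j] Bc2[OF j] by linarith
    qed
    then have "c2 = vec2 0 0" by (rule inj[OF c2car vec2_carrier])
    then have "vec2 (snd gg) (- fst gg) = vec2 0 0" by (simp only: c2_def)
    then have "snd gg = 0 \<and> - fst gg = 0" by (rule vec2_inj)
    then have "f = negv e" by (cases e, cases f) (simp add: gg_def gv_def negv_def)
    then show False using fne by simp
  next
    case False
    then have zv: "z = v" using zuv by simp
    have "B *\<^sub>v c2 = B *\<^sub>v c0"
    proof (rule vec_eqI_n[OF Bc2car])
      show "B *\<^sub>v c0 \<in> carrier_vec n" using wcar unfolding w_def .
      fix j assume j: "j < n"
      have "z $ j = v $ j" using zv by simp
      moreover have "(B *\<^sub>v c0) $ j = w $ j" unfolding w_def by (rule refl)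
      moreover have "u $ j - v $ j = w $ j" using uj[OF j] vj[OF j] by (simp add: max_def)
      ultimately show "(B *\<^sub>v c2) $ j = (B *\<^sub>v c0) $ j"
        using zj[OF j] Bc2[OF j] by linarith
    qed
    then have "c2 = c0" by (rule inj[OF c2car c0car])
    then have "vec2 (snd gg) (- fst gg) = vec2 (- snd e) (fst e)" by (simp only: c2_def c0_def)
    then have "snd gg = - snd e \<and> - fst gg = fst e" by (rule vec2_inj)
    then have "f = (0,0)" by (cases e, cases f) (simp add: gg_def gv_def)
    then show False using fnz by simp
  qed
qed


lemma brow_idx:
  assumes "dim_col B = 2" "s < dim_row B"
  shows "brow B s $ 0 = of_int (B $$ (s,0))" "brow B s $ 1 = of_int (B $$ (s,1))" "dim_vec (brow B s) = 2"
  using assms by (simp_all add: brow_def)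

lemma rat2_eqI:
  fixes x y :: "rat vec"
  assumes "dim_vec x = 2" "dim_vec y = 2" "x $ 0 = y $ 0" "x $ 1 = y $ 1"
  shows "x = y"
  using assms by (intro eq_vecI) (auto simp: less_2_cases_iff)

lemma bouquet_S:
  assumes rB: "dim_row B = n" and cB: "dim_col B = 2" and i: "i < n" and nzi: "bsB B i \<noteq> (0,0)"
  shows "bouquet B {k. k < n \<and> det2 (bsB B k) (bsB B i) = 0}"
proof -
  define S where "S = {k. k < n \<and> det2 (bsB B k) (bsB B i) = 0}"
  have bi: "brow B s $ 0 = of_int (B $$ (s,0))" "brow B s $ 1 = of_int (B $$ (s,1))" "dim_vec (brow B s) = 2"
    if "s < n" for s using brow_idx[OF cB, of s] that rB by auto
  have iS: "i \<in> S" unfolding S_def using i by (simp add: det2_def)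
  have bnz: "brow B i \<noteq> 0\<^sub>v 2"
  proof
    assume "brow B i = 0\<^sub>v 2"
    then have "brow B i $ 0 = 0" "brow B i $ 1 = 0" by simp_all
    then have "B $$ (i,0) = 0" "B $$ (i,1) = 0" using bi[OF i] by simp_all
    then show False using nzi by (simp add: bsB_def)
  qed
  have ods: "one_dim_span B S" unfolding one_dim_span_def
  proof (intro conjI)
    show "\<exists>s\<in>S. brow B s \<noteq> 0\<^sub>v (dim_col B)" unfolding cB using iS bnz by blast
    show "\<exists>w. w \<in> carrier_vec (dim_col B) \<and> w \<noteq> 0\<^sub>v (dim_col B) \<and> (\<forall>s\<in>S. \<exists>c. brow B s = c \<cdot>\<^sub>v w)"
    proof (rule exI[of _ "brow B i"], intro conjI ballI)
      show "brow B i \<in> carrier_vec (dim_col B)" by (rule carrier_vecI) (simp only: bi(3)[OF i] cB)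
      show "brow B i \<noteq> 0\<^sub>v (dim_col B)" unfolding cB by (rule bnz)
      fix s assume sS: "s \<in> S"
      then have s: "s < n" and d: "B $$ (s,0) * B $$ (i,1) = B $$ (s,1) * B $$ (i,0)"
        unfolding S_def by (simp_all add: det2_def bsB_def)
      have dq: "rat_of_int (B $$ (s,0)) * rat_of_int (B $$ (i,1)) = rat_of_int (B $$ (s,1)) * rat_of_int (B $$ (i,0))"
        using arg_cong[OF d, of rat_of_int] by simp
      show "\<exists>c. brow B s = c \<cdot>\<^sub>v brow B i"
      proof (cases "B $$ (i,0) = 0")
        case False
        define c where "c = rat_of_int (B $$ (s,0)) / rat_of_int (B $$ (i,0))"
        have "brow B s = c \<cdot>\<^sub>v brow B i"
        proof (rule rat2_eqI)
          show "brow B s $ 0 = (c \<cdot>\<^sub>v brow B i) $ 0" using bi[OF s] bi[OF i] False by (simp add: c_def)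
          show "brow B s $ 1 = (c \<cdot>\<^sub>v brow B i) $ 1" using bi[OF s] bi[OF i] False dq
            by (simp add: c_def field_simps)
        qed (use bi[OF s] bi[OF i] in auto)
        then show ?thesis by blast
      next
        case True
        then have i1: "B $$ (i,1) \<noteq> 0" using nzi by (simp add: bsB_def)
        then have s0: "B $$ (s,0) = 0" using d True by simp
        define c where "c = rat_of_int (B $$ (s,1)) / rat_of_int (B $$ (i,1))"
        have "brow B s = c \<cdot>\<^sub>v brow B i"
        proof (rule rat2_eqI)
          show "brow B s $ 0 = (c \<cdot>\<^sub>v brow B i) $ 0" using bi[OF s] bi[OF i] True s0 by simp
          show "brow B s $ 1 = (c \<cdot>\<^sub>v brow B i) $ 1" using bi[OF s] bi[OF i] i1 by (simp add: c_def)
        qed (use bi[OF s] bi[OF i] in auto)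
        then show ?thesis by blast
      qed
    qed
  qed
  have maxi: "\<forall>T. S \<subset> T \<and> T \<subseteq> {..<dim_row B} \<longrightarrow> \<not> one_dim_span B T"
  proof (intro allI impI notI)
    fix T assume T: "S \<subset> T \<and> T \<subseteq> {..<dim_row B}" and od: "one_dim_span B T"
    obtain k where k: "k \<in> T" "k \<notin> S" using T by blast
    have kn: "k < n" using k T rB by auto
    then have dk: "det2 (bsB B k) (bsB B i) \<noteq> 0" using k(2) unfolding S_def by simp
    have iT: "i \<in> T" using T iS by blast
    obtain w where w: "\<forall>s\<in>T. \<exists>c. brow B s = c \<cdot>\<^sub>v w" using od unfolding one_dim_span_def by blast
    obtain ck where ck: "brow B k = ck \<cdot>\<^sub>v w" using w k(1) by blast
    obtain ci where ci: "brow B i = ci \<cdot>\<^sub>v w" using w iT by blast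
    have dw: "dim_vec w = 2" using ck bi[OF kn] by (metis index_smult_vec(2))
    have "rat_of_int (det2 (bsB B k) (bsB B i)) =
        brow B k $ 0 * brow B i $ 1 - brow B k $ 1 * brow B i $ 0"
      using bi[OF kn] bi[OF i] by (simp add: det2_def bsB_def)
    also have "\<dots> = 0" unfolding ck ci using dw by simp
    finally show False using dk by simp
  qed
  have sub: "S \<subseteq> {..<dim_row B}" unfolding S_def using rB by auto
  show ?thesis unfolding bouquet_def S_def[symmetric] using sub ods maxi by blast
qed


lemma mixed_S:
  assumes rB: "dim_row B = n" and cB: "dim_col B = 2" and i: "i < n" and j: "j < n"
    and nzi: "bsB B i \<noteq> (0,0)" and nzj: "bsB B j \<noteq> (0,0)"
    and pj: "prim (bsB B j) = negv (prim (bsB B i))"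
  shows "mixed_bouquet B {k. k < n \<and> det2 (bsB B k) (bsB B i) = 0}"
proof -
  define p where "p = prim (bsB B i)"
  define gi where "gi = gcd (fst (bsB B i)) (snd (bsB B i))"
  define gj where "gj = gcd (fst (bsB B j)) (snd (bsB B j))"
  have gi0: "gi > 0" using prim_props(1)[OF nzi] gi_def by simp
  have gj0: "gj > 0" using prim_props(1)[OF nzj] gj_def by simp
  have bi: "B $$ (i,0) = gi * fst p" "B $$ (i,1) = gi * snd p"
    using prim_props(2,3)[OF nzi] gi_def p_def by (simp_all add: bsB_def)
  have bj: "B $$ (j,0) = - (gj * fst p)" "B $$ (j,1) = - (gj * snd p)"
    using prim_props(2,3)[OF nzj] gj_def p_def pj by (simp_all add: bsB_def negv_def)
  have jS: "j \<in> {k. k < n \<and> det2 (bsB B k) (bsB B i) = 0}"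
    using j bi bj by (simp add: det2_def bsB_def algebra_simps)
  define l where "l = - (rat_of_int gj / rat_of_int gi)"
  have l0: "l < 0" using gi0 gj0 l_def by simp
  have bri: "brow B s $ 0 = of_int (B $$ (s,0))" "brow B s $ 1 = of_int (B $$ (s,1))" "dim_vec (brow B s) = 2"
    if "s < n" for s using brow_idx[OF cB, of s] that rB by auto
  have "brow B j = l \<cdot>\<^sub>v brow B i"
  proof (rule rat2_eqI)
    show "dim_vec (brow B j) = 2" using bri(3)[OF j] .
    show "dim_vec (l \<cdot>\<^sub>v brow B i) = 2" using bri(3)[OF i] by simp
    show "brow B j $ 0 = (l \<cdot>\<^sub>v brow B i) $ 0" using bri[OF i] bri[OF j] bi bj gi0
      by (simp add: l_def field_simps)
    show "brow B j $ 1 = (l \<cdot>\<^sub>v brow B i) $ 1" using bri[OF i] bri[OF j] bi bj gi0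
      by (simp add: l_def field_simps)
  qed
  moreover have iS: "i \<in> {k. k < n \<and> det2 (bsB B k) (bsB B i) = 0}" using i by (simp add: det2_def)
  ultimately show ?thesis unfolding mixed_bouquet_def using bouquet_S[OF rB cB i nzi] jS l0 by blast
qed

theorem corollary1p2:
  fixes A B :: "int mat" and n :: nat
  assumes "dim_col A = n" and "dim_row A + 2 = n"
    and "rank_int A = n - 2"
    and "\<forall>x \<in> kerZ A. natvec n x \<longrightarrow> x = 0\<^sub>v n"
    and "gale A B"
    and "\<forall>i < n. row B i \<noteq> 0\<^sub>v (dim_col B)"
    and "strongly_robust A"
  shows "2 \<le> card {S. mixed_bouquet B S}"
proof -
  note st = gale_setup[OF assms(1,2,3,5)]
  have rB: "dim_row B = n" and cB: "dim_col B = 2" using st by auto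
  have pos: "a = 0 \<and> b = 0" if "\<forall>j<n. B $$ (j,0) * a + B $$ (j,1) * b \<ge> 0" for a b
    by (rule pos2[OF rB cB st(3) st(4) assms(4) that]) auto
  have nz: "\<forall>j<n. bsB B j \<noteq> (0,0)"
  proof (intro allI impI notI)
    fix j assume j: "j < n" and z: "bsB B j = (0,0)"
    have "row B j = 0\<^sub>v (dim_col B)"
    proof (rule eq_vecI)
      fix k assume "k < dim_vec (0\<^sub>v (dim_col B) :: int vec)"
      then have "k = 0 \<or> k = 1" using cB by auto
      then show "row B j $ k = 0\<^sub>v (dim_col B) $ k" using z j rB cB by (auto simp: bsB_def)
    qed simp
    then show False using assms(6) j by blast
  qed
  have ex: "\<forall>v. v \<noteq> (0,0) \<longrightarrow> (\<exists>j<n. det2 v (bsB B j) > 0)"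
  proof (intro allI impI)
    fix v :: "int \<times> int" assume v: "v \<noteq> (0,0)"
    show "\<exists>j<n. det2 v (bsB B j) > 0"
    proof (rule ccontr)
      assume "\<not> (\<exists>j<n. det2 v (bsB B j) > 0)"
      then have "\<forall>j<n. B $$ (j,0) * snd v + B $$ (j,1) * (- fst v) \<ge> 0"
        by (auto simp: det2_def bsB_def algebra_simps)
      then have "snd v = 0 \<and> - fst v = 0" by (rule pos)
      then show False using v by (cases v) auto
    qed
  qed
  have bad: "\<forall>i<n. \<forall>f. det2 (prim (bsB B i)) f = 1 \<longrightarrow>
        (\<exists>j<n. det2 f (bsB B j) > 0 \<and> det2 (bsB B j) (gv (prim (bsB B i)) f) > 0)"
  proof (intro allI impI)
    fix i f assume i: "i < n" and ef: "det2 (prim (bsB B i)) f = 1"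
    show "\<exists>j<n. det2 f (bsB B j) > 0 \<and> det2 (bsB B j) (gv (prim (bsB B i)) f) > 0"
    proof (rule ccontr)
      assume "\<not> ?thesis"
      then have good: "\<forall>j<n. \<not> (det2 f (bsB B j) > 0 \<and> det2 (bsB B j) (gv (prim (bsB B i)) f) > 0)"
        by blast
      show False
        by (rule good_contra[OF assms(1) rB cB st(3) st(4) st(5) pos assms(7) i _ ef good])
           (use nz i in auto)
    qed
  qed
  obtain i1 j1 i2 j2 where idx: "i1 < n" "j1 < n" "i2 < n" "j2 < n"
    and p1: "prim (bsB B j1) = negv (prim (bsB B i1))"
    and p2: "prim (bsB B j2) = negv (prim (bsB B i2))"
    and d12: "det2 (bsB B i1) (bsB B i2) \<noteq> 0"
    using two_mixed[OF nz ex bad] by blast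
  define S1 where "S1 = {k. k < n \<and> det2 (bsB B k) (bsB B i1) = 0}"
  define S2 where "S2 = {k. k < n \<and> det2 (bsB B k) (bsB B i2) = 0}"
  have m1: "mixed_bouquet B S1" unfolding S1_def
    by (rule mixed_S[OF rB cB idx(1) idx(2) _ _ p1]) (use nz idx in auto)
  have m2: "mixed_bouquet B S2" unfolding S2_def
    by (rule mixed_S[OF rB cB idx(3) idx(4) _ _ p2]) (use nz idx in auto)
  have "i2 \<in> S2" unfolding S2_def using idx by (simp add: det2_def)
  moreover have "i2 \<notin> S1" unfolding S1_def using d12 by (auto simp: det2_def algebra_simps)
  ultimately have ne: "S1 \<noteq> S2" by blast
  have fin: "finite {S. mixed_bouquet B S}"
  proof (rule finite_subset)
    show "{S. mixed_bouquet B S} \<subseteq> Pow {..<dim_row B}"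
      unfolding mixed_bouquet_def bouquet_def by auto
  qed simp
  have "{S1, S2} \<subseteq> {S. mixed_bouquet B S}" using m1 m2 by simp
  then have "card {S1, S2} \<le> card {S. mixed_bouquet B S}" using fin by (rule card_mono[rotated])
  then show ?thesis using ne by simp
qed

end
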